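(* Let $f:M\to\mathbb{R}^3$ be an immersion with eq\"uiaffine transversal vector field $\xi$ and positive definite induced bilinear form $h$, let $(u,v)$ be isothermal coordinates centered at an umbilical point $(0,0)$ of order $\ge k$, with $\lambda_0=b_{11}(0,0)=b_{22}(0,0)\neq0$, and set $q_0=f(0,0)+\lambda_0^{-1}\xi(0,0)$. Let $\nu$ be the co-normal, $p=\nu\cdot(f-q_0)$, $\mathcal{P}=(p_{uu}-p_{vv},2p_{uv})$ and $\mathcal{B}=(b_{11}-b_{22},2b_{12})$. Then $$J_k\mathcal{P}=\lambda_0^{-1}\delta_0\,J_k\mathcal{B},$$ where $J_k$ denotes the $k$-jet at $(0,0)$ and $\delta_0=\delta(0,0)$ with $\delta=[f_u,f_v,\xi][\nu,\nu_u,\nu_v]/\rho$.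
   Context: $D$ is the flat connection of $\mathbb{R}^3$; $h$ and the shape operator $B$ are defined by $D_Xf_*Y=f_*(\nabla_XY)+h(X,Y)\xi$, $D_X\xi=-f_*(BX)+\tau(X)\xi$, eq\"uiaffine meaning $\tau=0$. Isothermal coordinates: $h(\partial_u,\partial_u)=h(\partial_v,\partial_v)=\rho$, $h(\partial_u,\partial_v)=0$. The matrix of $B$ is given by $\xi_u=-b_{11}f_u-b_{21}f_v$, $\xi_v=-b_{12}f_u-b_{22}f_v$ (with $b_{12}=b_{21}$). Umbilical: $B$ a multiple of the identity; order $\ge k$ means the $(k-1)$-jet of $\mathcal{B}$ at $(0,0)$ vanishes. The co-normal $\nu$ satisfies $\nu\cdot f_u=\nu\cdot f_v=0$, $\nu\cdot\xi=1$; $[a,b,c]$ is the determinant of three vectors. *)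

theory Defs
  imports "HOL-Analysis.Analysis"
begin

definition pd :: "bool \<Rightarrow> (real \<times> real \<Rightarrow> 'a::real_normed_vector) \<Rightarrow> real \<times> real \<Rightarrow> 'a" where
  "pd b g z = (if b then vector_derivative (\<lambda>t. g (fst z, t)) (at (snd z))
               else vector_derivative (\<lambda>s. g (s, snd z)) (at (fst z)))"

abbreviation du where "du \<equiv> pd False"
abbreviation dv where "dv \<equiv> pd True"

text \<open>Iterated partial derivatives, innermost derivative last in the list.\<close>
fun pds :: "bool list \<Rightarrow> (real \<times> real \<Rightarrow> 'a::real_normed_vector) \<Rightarrow> real \<times> real \<Rightarrow> 'a" where
  "pds [] g = g"
| "pds (b # bs) g = pd b (pds bs g)"

definition smooth2_on :: "(real \<times> real) set \<Rightarrow> (real \<times> real \<Rightarrow> 'a::real_normed_vector) \<Rightarrow> bool" where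
  "smooth2_on U g \<longleftrightarrow> (\<forall>bs. continuous_on U (pds bs g) \<and> (\<forall>z\<in>U. pds bs g differentiable (at z)))"

definition jet_eq :: "real \<times> real \<Rightarrow> nat \<Rightarrow> (real \<times> real \<Rightarrow> 'a::real_normed_vector) \<Rightarrow> (real \<times> real \<Rightarrow> 'a) \<Rightarrow> bool" where
  "jet_eq z k g h \<longleftrightarrow> (\<forall>i j. i + j \<le> k \<longrightarrow>
      pds (replicate i False @ replicate j True) g z = pds (replicate i False @ replicate j True) h z)"

definition bracket3 :: "real^3 \<Rightarrow> real^3 \<Rightarrow> real^3 \<Rightarrow> real" where
  "bracket3 a b c = a \<bullet> cross3 b c"

end

theory Submission
  imports Defs
begin
definition sl :: "bool \<Rightarrow> real \<times> real \<Rightarrow> real \<Rightarrow> real \<times> real" where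
  "sl b z t = (if b then (fst z, t) else (t, snd z))"
definition bs0 :: "bool \<Rightarrow> real \<times> real \<Rightarrow> real" where
  "bs0 b z = (if b then snd z else fst z)"

lemma pd_alt: "pd b g z = vector_derivative (\<lambda>t. g (sl b z t)) (at (bs0 b z))"
  by (simp add: pd_def sl_def bs0_def)

lemma sl_base[simp]: "sl b z (bs0 b z) = z"
  by (simp add: sl_def bs0_def)

lemma sl_vd: "(sl b z has_vector_derivative (if b then (0,1) else (1,0))) (at t)"
proof -
  have "sl b z = (\<lambda>t. (if b then (fst z, 0) else (0, snd z)) + t *\<^sub>R (if b then (0,1) else (1,0)))"
    by (auto simp: sl_def fun_eq_iff)
  then show ?thesis
    by (auto intro!: derivative_eq_intros)
qed

lemma sl_cont: "continuous_on UNIV (sl b z)"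
  unfolding sl_def by (cases b) (auto intro!: continuous_intros)

lemma pd_has:
  assumes "g differentiable (at z)"
  shows "((\<lambda>t. g (sl b z t)) has_vector_derivative pd b g z) (at (bs0 b z))"
proof -
  have "sl b z differentiable (at (bs0 b z))"
    using sl_vd differentiableI_vector by blast
  then have "(g \<circ> sl b z) differentiable (at (bs0 b z))"
    using differentiable_chain_at[of "sl b z" "bs0 b z" g] assms by simp
  then show ?thesis
    unfolding pd_alt using vector_derivative_works[of "g \<circ> sl b z"] by (simp add: o_def)
qed

lemma pd_local:
  assumes "open U" "z \<in> U" "\<And>x. x \<in> U \<Longrightarrow> g x = h x"
  shows "pd b g z = pd b h z"
proof -
  have op: "open (sl b z -` U)"
    using sl_cont assms(1) open_vimage by blast
  have "bs0 b z \<in> sl b z -` U" using assms(2) by simp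
  then have ev: "eventually (\<lambda>t. t \<in> sl b z -` U) (nhds (bs0 b z))"
    using op eventually_nhds by blast
  show ?thesis unfolding pd_alt
    by (rule vector_derivative_cong_eq) (auto intro: eventually_mono[OF ev] assms(3))
qed

lemma pds_append: "pds (xs @ ys) g = pds xs (pds ys g)"
  by (induction xs) auto

lemma pds_local:
  assumes "open U" "z \<in> U" "\<And>x. x \<in> U \<Longrightarrow> g x = h x"
  shows "pds bs g z = pds bs h z"
  using assms(2)
proof (induction bs arbitrary: z)
  case Nil then show ?case using assms(3) by simp
next
  case (Cons b bs)
  then show ?case using pd_local[OF assms(1) Cons.prems, of "pds bs g" "pds bs h"] by simp
qed

lemma pd_const[simp]: "pd b (\<lambda>z. c) z = 0"
  by (simp add: pd_alt)

lemma pds_const: "pds bs (\<lambda>z. c) = (\<lambda>z. if bs = [] then c else 0)"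
proof (induction bs)
  case Nil then show ?case by simp
next
  case (Cons b bs)
  show ?case
  proof (cases "bs = []")
    case True then show ?thesis by (simp add: fun_eq_iff)
  next
    case False then have "pds bs (\<lambda>z. c) = (\<lambda>z. 0)" using Cons by (simp add: fun_eq_iff)
    then show ?thesis by simp
  qed
qed

lemma pd_add:
  assumes "g differentiable (at z)" "h differentiable (at z)"
  shows "pd b (\<lambda>z. g z + h z) z = pd b g z + pd b h z"
  unfolding pd_alt[of b "\<lambda>z. g z + h z"]
  by (rule vector_derivative_at, rule has_vector_derivative_add[OF pd_has[OF assms(1)] pd_has[OF assms(2)]])

lemma pd_diff:
  assumes "g differentiable (at z)" "h differentiable (at z)"
  shows "pd b (\<lambda>z. g z - h z) z = pd b g z - pd b h z"
  unfolding pd_alt[of b "\<lambda>z. g z - h z"]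
  by (rule vector_derivative_at, rule has_vector_derivative_diff[OF pd_has[OF assms(1)] pd_has[OF assms(2)]])

lemma pd_bil:
  assumes "bounded_bilinear P" "g differentiable (at z)" "h differentiable (at z)"
  shows "pd b (\<lambda>z. P (g z) (h z)) z = P (pd b g z) (h z) + P (g z) (pd b h z)"
  unfolding pd_alt[of b "\<lambda>z. P (g z) (h z)"]
  apply (rule vector_derivative_at)
  using bounded_bilinear.has_vector_derivative[OF assms(1) pd_has[OF assms(2)] pd_has[OF assms(3)]]
  by (simp add: add.commute)

lemma diff_bil:
  assumes "bounded_bilinear P" "g differentiable (at z)" "h differentiable (at z)"
  shows "(\<lambda>z. P (g z) (h z)) differentiable (at z)"
  using assms bounded_bilinear.FDERIV[OF assms(1)] unfolding differentiable_def by blast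

lemma pd_inverse:
  fixes g :: "real \<times> real \<Rightarrow> real"
  assumes "g differentiable (at z)" "g z \<noteq> 0"
  shows "pd b (\<lambda>z. inverse (g z)) z = - (pd b g z * (inverse (g z) * inverse (g z)))"
proof -
  have "((\<lambda>t. g (sl b z t)) has_real_derivative pd b g z) (at (bs0 b z))"
    using pd_has[OF assms(1)] has_real_derivative_iff_has_vector_derivative by blast
  from DERIV_inverse_fun[OF this] have
    "((\<lambda>t. inverse (g (sl b z t))) has_real_derivative - (pd b g z * inverse (g z ^ Suc (Suc 0)))) (at (bs0 b z))"
    using assms(2) by simp
  then show ?thesis unfolding pd_alt[of b "\<lambda>z. inverse (g z)"]
    by (intro vector_derivative_at) (simp add: has_real_derivative_iff_has_vector_derivative power2_eq_square)
qed

lemma diff_inverse: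
  fixes g :: "real \<times> real \<Rightarrow> real"
  assumes "g differentiable (at z)" "g z \<noteq> 0"
  shows "(\<lambda>z. inverse (g z)) differentiable (at z)"
  using assms by (auto intro!: derivative_intros)

definition Sn :: "(real \<times> real) set \<Rightarrow> nat \<Rightarrow> (real \<times> real \<Rightarrow> 'a::real_normed_vector) \<Rightarrow> bool" where
  "Sn U n g \<longleftrightarrow> (\<forall>bs. length bs \<le> n \<longrightarrow> continuous_on U (pds bs g) \<and> (\<forall>z\<in>U. pds bs g differentiable (at z)))"

lemma pds_snoc: "pds (bs @ [b]) g = pds bs (pd b g)"
  by (simp add: pds_append)

lemma Sn_Suc: "Sn U (Suc n) g \<longleftrightarrow> (continuous_on U g \<and> (\<forall>z\<in>U. g differentiable (at z))) \<and> (\<forall>b. Sn U n (pd b g))"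
proof
  assume H: "Sn U (Suc n) g"
  have "continuous_on U g \<and> (\<forall>z\<in>U. g differentiable (at z))"
    using H[unfolded Sn_def, rule_format, of "[]"] by simp
  moreover have "Sn U n (pd b g)" for b
    unfolding Sn_def
  proof (intro allI impI)
    fix bs :: "bool list" assume "length bs \<le> n"
    then show "continuous_on U (pds bs (pd b g)) \<and> (\<forall>z\<in>U. pds bs (pd b g) differentiable (at z))"
      using H[unfolded Sn_def, rule_format, of "bs @ [b]"] by (simp add: pds_snoc)
  qed
  ultimately show "(continuous_on U g \<and> (\<forall>z\<in>U. g differentiable (at z))) \<and> (\<forall>b. Sn U n (pd b g))" by blast
next
  assume H: "(continuous_on U g \<and> (\<forall>z\<in>U. g differentiable (at z))) \<and> (\<forall>b. Sn U n (pd b g))"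
  show "Sn U (Suc n) g" unfolding Sn_def
  proof (intro allI impI)
    fix bs :: "bool list" assume L: "length bs \<le> Suc n"
    show "continuous_on U (pds bs g) \<and> (\<forall>z\<in>U. pds bs g differentiable (at z))"
    proof (cases bs rule: rev_cases)
      case Nil then show ?thesis using H by simp
    next
      case (snoc ys y)
      then show ?thesis using H L unfolding Sn_def by (simp add: pds_snoc)
    qed
  qed
qed

lemma Sn_0: "Sn U 0 g \<longleftrightarrow> continuous_on U g \<and> (\<forall>z\<in>U. g differentiable (at z))"
  by (simp add: Sn_def)

lemma smooth_Sn: "smooth2_on U g \<longleftrightarrow> (\<forall>n. Sn U n g)"
  unfolding smooth2_on_def Sn_def by blast

lemma Sn_mono: "Sn U n g \<Longrightarrow> m \<le> n \<Longrightarrow> Sn U m g"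
  unfolding Sn_def by auto

lemma Sn_cong:
  assumes "open U" "\<And>x. x \<in> U \<Longrightarrow> g x = h x" "Sn U n g"
  shows "Sn U n h"
  unfolding Sn_def
proof (intro allI impI)
  fix bs :: "bool list" assume L: "length bs \<le> n"
  have eq: "pds bs g x = pds bs h x" if "x \<in> U" for x
    using pds_local[OF assms(1) that assms(2)] .
  have c: "continuous_on U (pds bs g)" and d: "\<forall>z\<in>U. pds bs g differentiable (at z)"
    using assms(3) L unfolding Sn_def by auto
  have "continuous_on U (pds bs h)"
    using c eq by (rule continuous_on_eq)
  moreover have "pds bs h differentiable (at z)" if z: "z \<in> U" for z
  proof -
    obtain D where "(pds bs g has_derivative D) (at z)" using d z unfolding differentiable_def by blast
    from has_derivative_transform_within_open[OF this assms(1) z eq]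
    show ?thesis unfolding differentiable_def by blast
  qed
  ultimately show "continuous_on U (pds bs h) \<and> (\<forall>z\<in>U. pds bs h differentiable (at z))" by blast
qed

lemma Sn_const: "Sn U n (\<lambda>z. c)"
  unfolding Sn_def pds_const by auto

lemma Sn_add:
  assumes "open U" "Sn U n g" "Sn U n h"
  shows "Sn U n (\<lambda>z. g z + h z)"
  using assms(2,3)
proof (induction n arbitrary: g h)
  case 0 then show ?case by (auto simp: Sn_0 intro!: continuous_intros)
next
  case (Suc n)
  have "Sn U n (pd b (\<lambda>z. g z + h z))" for b
  proof (rule Sn_cong[OF assms(1)])
    show "Sn U n (\<lambda>z. pd b g z + pd b h z)" using Suc by (simp add: Sn_Suc)
    show "x \<in> U \<Longrightarrow> pd b g x + pd b h x = pd b (\<lambda>z. g z + h z) x" for x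
      using Suc.prems by (simp add: Sn_Suc pd_add)
  qed
  then show ?case using Suc.prems by (auto simp: Sn_Suc intro!: continuous_intros)
qed

lemma Sn_diff:
  assumes "open U" "Sn U n g" "Sn U n h"
  shows "Sn U n (\<lambda>z. g z - h z)"
  using assms(2,3)
proof (induction n arbitrary: g h)
  case 0 then show ?case by (auto simp: Sn_0 intro!: continuous_intros)
next
  case (Suc n)
  have "Sn U n (pd b (\<lambda>z. g z - h z))" for b
  proof (rule Sn_cong[OF assms(1)])
    show "Sn U n (\<lambda>z. pd b g z - pd b h z)" using Suc by (simp add: Sn_Suc)
    show "x \<in> U \<Longrightarrow> pd b g x - pd b h x = pd b (\<lambda>z. g z - h z) x" for x
      using Suc.prems by (simp add: Sn_Suc pd_diff)
  qed
  then show ?case using Suc.prems by (auto simp: Sn_Suc intro!: continuous_intros)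
qed

lemma Sn_bil:
  assumes bb: "bounded_bilinear P" and "open U" "Sn U n g" "Sn U n h"
  shows "Sn U n (\<lambda>z. P (g z) (h z))"
  using assms(3,4)
proof (induction n arbitrary: g h)
  case 0 then show ?case
    by (auto simp: Sn_0 intro!: bounded_bilinear.continuous_on[OF bb] diff_bil[OF bb])
next
  case (Suc n)
  have "Sn U n (pd b (\<lambda>z. P (g z) (h z)))" for b
  proof (rule Sn_cong[OF assms(2)])
    have "Sn U n (pd b g)" "Sn U n h" "Sn U n g" "Sn U n (pd b h)"
      using Suc.prems Sn_mono[of U "Suc n" _ n] by (auto simp: Sn_Suc)
    then show "Sn U n (\<lambda>z. P (pd b g z) (h z) + P (g z) (pd b h z))"
      using Suc.IH by (intro Sn_add[OF assms(2)]) auto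
    show "x \<in> U \<Longrightarrow> P (pd b g x) (h x) + P (g x) (pd b h x) = pd b (\<lambda>z. P (g z) (h z)) x" for x
      using Suc.prems by (simp add: Sn_Suc pd_bil[OF bb])
  qed
  then show ?case using Suc.prems
    by (auto simp: Sn_Suc intro!: bounded_bilinear.continuous_on[OF bb] diff_bil[OF bb])
qed

lemma bb_mult: "bounded_bilinear ((*) :: real \<Rightarrow> real \<Rightarrow> real)"
  by (rule bounded_bilinear_mult)

lemma Sn_mult:
  fixes g h :: "real \<times> real \<Rightarrow> real"
  shows "open U \<Longrightarrow> Sn U n g \<Longrightarrow> Sn U n h \<Longrightarrow> Sn U n (\<lambda>z. g z * h z)"
  using Sn_bil[OF bb_mult] by blast

lemma Sn_inverse:
  fixes g :: "real \<times> real \<Rightarrow> real"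
  assumes "open U" "Sn U n g" "\<And>z. z \<in> U \<Longrightarrow> g z \<noteq> 0"
  shows "Sn U n (\<lambda>z. inverse (g z))"
  using assms(2)
proof (induction n)
  case 0 then show ?case using assms(3)
    by (auto simp: Sn_0 intro!: continuous_intros diff_inverse)
next
  case (Suc n)
  have IH: "Sn U n (\<lambda>z. inverse (g z))" using Suc Sn_mono[of U "Suc n" g n] by auto
  have "Sn U n (pd b (\<lambda>z. inverse (g z)))" for b
  proof (rule Sn_cong[OF assms(1)])
    have "Sn U n (pd b g)" using Suc.prems by (auto simp: Sn_Suc)
    then show "Sn U n (\<lambda>z. - (pd b g z * (inverse (g z) * inverse (g z))))"
    proof -
      have "Sn U n (\<lambda>z. pd b g z * (inverse (g z) * inverse (g z)))"
        using Sn_mult[OF assms(1)] IH \<open>Sn U n (pd b g)\<close> by blast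
      from Sn_diff[OF assms(1) Sn_const[of U n 0] this] show ?thesis by simp
    qed
    show "x \<in> U \<Longrightarrow> - (pd b g x * (inverse (g x) * inverse (g x))) = pd b (\<lambda>z. inverse (g z)) x" for x
      using Suc.prems assms(3) by (simp add: Sn_Suc pd_inverse)
  qed
  then show ?case using Suc.prems assms(3)
    by (auto simp: Sn_Suc intro!: continuous_intros diff_inverse)
qed

lemma sm_cong: "open U \<Longrightarrow> (\<And>x. x \<in> U \<Longrightarrow> g x = h x) \<Longrightarrow> smooth2_on U g \<Longrightarrow> smooth2_on U h"
  unfolding smooth_Sn using Sn_cong by blast
lemma sm_const: "smooth2_on U (\<lambda>z. c)"
  unfolding smooth_Sn using Sn_const by blast
lemma sm_add: "open U \<Longrightarrow> smooth2_on U g \<Longrightarrow> smooth2_on U h \<Longrightarrow> smooth2_on U (\<lambda>z. g z + h z)"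
  unfolding smooth_Sn using Sn_add by blast
lemma sm_diff: "open U \<Longrightarrow> smooth2_on U g \<Longrightarrow> smooth2_on U h \<Longrightarrow> smooth2_on U (\<lambda>z. g z - h z)"
  unfolding smooth_Sn using Sn_diff by blast
lemma sm_bil: "bounded_bilinear P \<Longrightarrow> open U \<Longrightarrow> smooth2_on U g \<Longrightarrow> smooth2_on U h \<Longrightarrow> smooth2_on U (\<lambda>z. P (g z) (h z))"
  unfolding smooth_Sn using Sn_bil by blast
lemma sm_inverse:
  fixes g :: "real \<times> real \<Rightarrow> real"
  shows "open U \<Longrightarrow> smooth2_on U g \<Longrightarrow> (\<And>z. z \<in> U \<Longrightarrow> g z \<noteq> 0) \<Longrightarrow> smooth2_on U (\<lambda>z. inverse (g z))"
  unfolding smooth_Sn using Sn_inverse by blast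
lemma sm_pd: "smooth2_on U g \<Longrightarrow> smooth2_on U (pd b g)"
  unfolding smooth2_on_def pds_snoc[symmetric] by blast
lemma sm_pds: "smooth2_on U g \<Longrightarrow> smooth2_on U (pds bs g)"
  by (induction bs) (auto intro: sm_pd)
lemma sm_diffble: "smooth2_on U g \<Longrightarrow> z \<in> U \<Longrightarrow> g differentiable (at z)"
  unfolding smooth2_on_def by (drule spec[of _ "[]"]) simp
lemma sm_cont: "smooth2_on U g \<Longrightarrow> continuous_on U g"
  unfolding smooth2_on_def by (drule spec[of _ "[]"]) simp

lemma bb_cross: "bounded_bilinear cross3"
  using bilinear_conv_bounded_bilinear bilinear_cross by blast

lemma sm_mult: fixes g h :: "real \<times> real \<Rightarrow> real"
  shows "open U \<Longrightarrow> smooth2_on U g \<Longrightarrow> smooth2_on U h \<Longrightarrow> smooth2_on U (\<lambda>z. g z * h z)"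
  using sm_bil[OF bounded_bilinear_mult] by blast
lemma sm_scaleR: "open U \<Longrightarrow> smooth2_on U g \<Longrightarrow> smooth2_on U h \<Longrightarrow> smooth2_on U (\<lambda>z. g z *\<^sub>R h z)"
  using sm_bil[OF bounded_bilinear_scaleR] by blast
lemma sm_inner: "open U \<Longrightarrow> smooth2_on U g \<Longrightarrow> smooth2_on U h \<Longrightarrow> smooth2_on U (\<lambda>z. g z \<bullet> h z)"
  using sm_bil[OF bounded_bilinear_inner] by blast
lemma sm_cross: "open U \<Longrightarrow> smooth2_on U g \<Longrightarrow> smooth2_on U h \<Longrightarrow> smooth2_on U (\<lambda>z. cross3 (g z) (h z))"
  using sm_bil[OF bb_cross] by blast
lemma sm_bracket: "open U \<Longrightarrow> smooth2_on U a \<Longrightarrow> smooth2_on U b \<Longrightarrow> smooth2_on U c \<Longrightarrow> smooth2_on U (\<lambda>z. bracket3 (a z) (b z) (c z))"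
  unfolding bracket3_def by (intro sm_inner sm_cross)
lemma sm_divide: fixes g h :: "real \<times> real \<Rightarrow> real"
  shows "open U \<Longrightarrow> smooth2_on U g \<Longrightarrow> smooth2_on U h \<Longrightarrow> (\<And>z. z \<in> U \<Longrightarrow> h z \<noteq> 0) \<Longrightarrow> smooth2_on U (\<lambda>z. g z / h z)"
  unfolding divide_inverse by (intro sm_mult sm_inverse)

lemma pdF:
  fixes g :: "real \<times> real \<Rightarrow> real"
  assumes "smooth2_on U g" "(s, t) \<in> U"
  shows "((\<lambda>s. g (s, t)) has_real_derivative pd False g (s, t)) (at s)"
  using pd_has[OF sm_diffble[OF assms], of False]
  by (simp add: sl_def bs0_def has_real_derivative_iff_has_vector_derivative)

lemma pdT:
  fixes g :: "real \<times> real \<Rightarrow> real"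
  assumes "smooth2_on U g" "(s, t) \<in> U"
  shows "((\<lambda>t. g (s, t)) has_real_derivative pd True g (s, t)) (at t)"
  using pd_has[OF sm_diffble[OF assms], of True]
  by (simp add: sl_def bs0_def has_real_derivative_iff_has_vector_derivative)

lemma schwarz_real:
  fixes g :: "real \<times> real \<Rightarrow> real"
  assumes U: "open U" and sm: "smooth2_on U g" and z: "z \<in> U"
  shows "pd True (pd False g) z = pd False (pd True g) z"
proof (rule ccontr)
  obtain x y where zxy: "z = (x, y)" by (cases z)
  define A where "A = pd False g"
  define B where "B = pd True g"
  define G1 where "G1 = pd True A"
  define G2 where "G2 = pd False B"
  have smA: "smooth2_on U A" and smB: "smooth2_on U B" unfolding A_def B_def using sm sm_pd by auto
  have c1: "continuous_on U G1" and c2: "continuous_on U G2"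
    unfolding G1_def G2_def using smA smB sm_pd sm_cont by blast+
  assume "pd True (pd False g) z \<noteq> pd False (pd True g) z"
  then have ne: "G1 z \<noteq> G2 z" unfolding G1_def G2_def A_def B_def .
  define e where "e = \<bar>G1 z - G2 z\<bar>"
  have e: "e > 0" using ne unfolding e_def by simp
  obtain r where r: "r > 0" "ball z r \<subseteq> U" using U z openE by blast
  have "isCont G1 z" "isCont G2 z" using c1 c2 U z continuous_on_eq_continuous_at by blast+
  then obtain d1 d2 where d1: "d1 > 0" "\<And>w. dist w z < d1 \<Longrightarrow> dist (G1 w) (G1 z) < e/2"
    and d2: "d2 > 0" "\<And>w. dist w z < d2 \<Longrightarrow> dist (G2 w) (G2 z) < e/2"
  proof -
    have e2: "e/2 > 0" using e by simp
    from \<open>isCont G1 z\<close>[unfolded continuous_at_eps_delta, rule_format, OF e2]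
    obtain d1 where "d1 > 0" "\<And>w. dist w z < d1 \<Longrightarrow> dist (G1 w) (G1 z) < e/2" by blast
    moreover from \<open>isCont G2 z\<close>[unfolded continuous_at_eps_delta, rule_format, OF e2]
    obtain d2 where "d2 > 0" "\<And>w. dist w z < d2 \<Longrightarrow> dist (G2 w) (G2 z) < e/2" by blast
    ultimately show ?thesis using that by blast
  qed
  define m where "m = min r (min d1 d2)"
  have m: "m > 0" using r d1 d2 unfolding m_def by simp
  define h where "h = m / 4"
  have h: "h > 0" using m unfolding h_def by simp
  have box: "(s, t) \<in> U \<and> dist (s, t) z < m" if "x \<le> s" "s \<le> x + h" "y \<le> t" "t \<le> y + h" for s t
  proof -
    have "dist (s, t) z = norm (s - x, t - y)" by (simp add: zxy dist_norm)
    also have "\<dots> \<le> norm (s - x) + norm (t - y)" by (rule norm_Pair_le)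
    also have "\<dots> \<le> 2 * h" using that by simp
    also have "\<dots> < m" using m unfolding h_def by simp
    finally have "dist (s, t) z < m" .
    moreover then have "(s, t) \<in> U" using r(2) unfolding m_def by (auto simp: dist_commute)
    ultimately show ?thesis by blast
  qed
  define D where "D = g (x + h, y + h) - g (x + h, y) - g (x, y + h) + g (x, y)"
  obtain s1 t1 where st1: "x < s1" "s1 < x + h" "y < t1" "t1 < y + h" "D = h * (h * G1 (s1, t1))"
  proof -
    have "DERIV (\<lambda>s. g (s, y + h) - g (s, y)) s :> A (s, y + h) - A (s, y)"
      if "x \<le> s" "s \<le> x + h" for s
      unfolding A_def using box[of s "y+h"] box[of s y] that h
      by (intro DERIV_diff pdF[OF sm]) auto
    from MVT2[of x "x + h", OF _ this] h obtain s1 where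
      s1: "x < s1" "s1 < x + h" "D = h * (A (s1, y + h) - A (s1, y))"
      unfolding D_def by auto
    have "DERIV (\<lambda>t. A (s1, t)) t :> G1 (s1, t)" if "y \<le> t" "t \<le> y + h" for t
      unfolding G1_def using box[of s1 t] that s1 by (intro pdT[OF smA]) auto
    from MVT2[of y "y + h", OF _ this] h obtain t1 where
      "y < t1" "t1 < y + h" "A (s1, y + h) - A (s1, y) = h * G1 (s1, t1)"
      by auto
    then show ?thesis using that s1 by auto
  qed
  obtain s2 t2 where st2: "x < s2" "s2 < x + h" "y < t2" "t2 < y + h" "D = h * (h * G2 (s2, t2))"
  proof -
    have "DERIV (\<lambda>t. g (x + h, t) - g (x, t)) t :> B (x + h, t) - B (x, t)"
      if "y \<le> t" "t \<le> y + h" for t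
      unfolding B_def using box[of "x+h" t] box[of x t] that h
      by (intro DERIV_diff pdT[OF sm]) auto
    from MVT2[of y "y + h", OF _ this] h obtain t2 where
      t2: "y < t2" "t2 < y + h" "D = h * (B (x + h, t2) - B (x, t2))"
      unfolding D_def by (auto simp: algebra_simps)
    have "DERIV (\<lambda>s. B (s, t2)) s :> G2 (s, t2)" if "x \<le> s" "s \<le> x + h" for s
      unfolding G2_def using box[of s t2] that t2 by (intro pdF[OF smB]) auto
    from MVT2[of x "x + h", OF _ this] h obtain s2 where
      "x < s2" "s2 < x + h" "B (x + h, t2) - B (x, t2) = h * G2 (s2, t2)"
      by auto
    then show ?thesis using that t2 by auto
  qed
  have eqG: "G1 (s1, t1) = G2 (s2, t2)" using st1(5) st2(5) h by simp
  have "dist (s1, t1) z < d1" using box[of s1 t1] st1 unfolding m_def by auto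
  then have a1: "\<bar>G1 (s1, t1) - G1 z\<bar> < e/2" using d1 by (simp add: dist_real_def)
  have "dist (s2, t2) z < d2" using box[of s2 t2] st2 unfolding m_def by auto
  then have a2: "\<bar>G2 (s2, t2) - G2 z\<bar> < e/2" using d2 by (simp add: dist_real_def)
  have aux: "\<And>a c d :: real. \<bar>a - c\<bar> < \<bar>c - d\<bar> / 2 \<Longrightarrow> \<bar>a - d\<bar> < \<bar>c - d\<bar> / 2 \<Longrightarrow> False"
    by (auto simp: abs_if split: if_splits)
  show False using aux[of "G1 (s1, t1)" "G1 z" "G2 z"] a1 a2 eqG unfolding e_def by simp
qed

lemma pd_inner_const:
  assumes "g differentiable (at z)"
  shows "pd b (\<lambda>w. g w \<bullet> c) z = pd b g z \<bullet> c"
  using pd_bil[OF bounded_bilinear_inner assms differentiable_const[of c]] by simp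

lemma schwarz:
  fixes g :: "real \<times> real \<Rightarrow> 'a::euclidean_space"
  assumes U: "open U" and sm: "smooth2_on U g" and z: "z \<in> U"
  shows "pd True (pd False g) z = pd False (pd True g) z"
proof (rule euclidean_eqI)
  fix i :: 'a assume "i \<in> Basis"
  define gi where "gi = (\<lambda>w. g w \<bullet> i)"
  have smi: "smooth2_on U gi" unfolding gi_def using sm_inner[OF U sm sm_const] .
  have e1: "pd False gi w = pd False g w \<bullet> i" "pd True gi w = pd True g w \<bullet> i" if "w \<in> U" for w
    unfolding gi_def using pd_inner_const[OF sm_diffble[OF sm that]] by auto
  have "pd True (pd False gi) z = pd True (\<lambda>w. pd False g w \<bullet> i) z"
    using pd_local[OF U z e1(1)] .
  also have "\<dots> = pd True (pd False g) z \<bullet> i"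
    using pd_inner_const[OF sm_diffble[OF sm_pd[OF sm] z]] .
  finally have 1: "pd True (pd False gi) z = pd True (pd False g) z \<bullet> i" .
  have "pd False (pd True gi) z = pd False (\<lambda>w. pd True g w \<bullet> i) z"
    using pd_local[OF U z e1(2)] .
  also have "\<dots> = pd False (pd True g) z \<bullet> i"
    using pd_inner_const[OF sm_diffble[OF sm_pd[OF sm] z]] .
  finally have 2: "pd False (pd True gi) z = pd False (pd True g) z \<bullet> i" .
  show "pd True (pd False g) z \<bullet> i = pd False (pd True g) z \<bullet> i"
    using 1 2 schwarz_real[OF U smi z] by simp
qed

lemma comm_T:
  fixes g :: "real \<times> real \<Rightarrow> 'a::euclidean_space"
  assumes U: "open U" and sm: "smooth2_on U g"
  shows "z \<in> U \<Longrightarrow> pd True (pds (replicate i False) g) z = pds (replicate i False) (pd True g) z"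
proof (induction i arbitrary: z)
  case 0 then show ?case by simp
next
  case (Suc i)
  have "pd True (pds (replicate (Suc i) False) g) z = pd True (pd False (pds (replicate i False) g)) z"
    by simp
  also have "\<dots> = pd False (pd True (pds (replicate i False) g)) z"
    using schwarz[OF U sm_pds[OF sm] Suc.prems] .
  also have "\<dots> = pd False (pds (replicate i False) (pd True g)) z"
    using pd_local[OF U Suc.prems Suc.IH] .
  finally show ?case by simp
qed

definition nF :: "bool list \<Rightarrow> nat" where "nF bs = length (filter (\<lambda>b. \<not> b) bs)"
definition nT :: "bool list \<Rightarrow> nat" where "nT bs = length (filter (\<lambda>b. b) bs)"

lemma nF_nT: "nT bs + nF bs = length bs"
  unfolding nF_def nT_def by (rule sum_length_filter_compl)

lemma canon:
  fixes g :: "real \<times> real \<Rightarrow> 'a::euclidean_space"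
  assumes U: "open U" and sm: "smooth2_on U g"
  shows "z \<in> U \<Longrightarrow> pds bs g z = pds (replicate (nF bs) False @ replicate (nT bs) True) g z"
proof (induction bs arbitrary: z)
  case Nil then show ?case by (simp add: nF_def nT_def)
next
  case (Cons b bs)
  have "pds (b # bs) g z = pd b (pds (replicate (nF bs) False @ replicate (nT bs) True) g) z"
    using pd_local[OF U Cons.prems Cons.IH] by simp
  also have "\<dots> = pds (replicate (nF (b # bs)) False @ replicate (nT (b # bs)) True) g z"
  proof (cases b)
    case True
    have "pd True (pds (replicate (nF bs) False) (pds (replicate (nT bs) True) g)) z
        = pds (replicate (nF bs) False) (pd True (pds (replicate (nT bs) True) g)) z"
      using comm_T[OF U sm_pds[OF sm] Cons.prems] .
    then show ?thesis using True by (simp add: nF_def nT_def pds_append)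
  next
    case False
    then show ?thesis by (simp add: nF_def nT_def)
  qed
  finally show ?case .
qed

lemma pds_add:
  assumes U: "open U" and g: "smooth2_on U g" and h: "smooth2_on U h"
  shows "z \<in> U \<Longrightarrow> pds bs (\<lambda>w. g w + h w) z = pds bs g z + pds bs h z"
proof (induction bs arbitrary: z)
  case Nil then show ?case by simp
next
  case (Cons b bs)
  have "pds (b # bs) (\<lambda>w. g w + h w) z = pd b (\<lambda>w. pds bs g w + pds bs h w) z"
    using pd_local[OF U Cons.prems Cons.IH] by simp
  also have "\<dots> = pds (b # bs) g z + pds (b # bs) h z"
    using pd_add[OF sm_diffble[OF sm_pds[OF g] Cons.prems] sm_diffble[OF sm_pds[OF h] Cons.prems]] by simp
  finally show ?case .
qed

lemma pds_diff:
  assumes U: "open U" and g: "smooth2_on U g" and h: "smooth2_on U h"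
  shows "z \<in> U \<Longrightarrow> pds bs (\<lambda>w. g w - h w) z = pds bs g z - pds bs h z"
proof (induction bs arbitrary: z)
  case Nil then show ?case by simp
next
  case (Cons b bs)
  have "pds (b # bs) (\<lambda>w. g w - h w) z = pd b (\<lambda>w. pds bs g w - pds bs h w) z"
    using pd_local[OF U Cons.prems Cons.IH] by simp
  also have "\<dots> = pds (b # bs) g z - pds (b # bs) h z"
    using pd_diff[OF sm_diffble[OF sm_pds[OF g] Cons.prems] sm_diffble[OF sm_pds[OF h] Cons.prems]] by simp
  finally show ?case .
qed

definition flat :: "nat \<Rightarrow> (real \<times> real \<Rightarrow> 'a::real_normed_vector) \<Rightarrow> bool" where
  "flat n g \<longleftrightarrow> (\<forall>bs. length bs < n \<longrightarrow> pds bs g (0, 0) = 0)"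

lemma flat_0[simp]: "flat 0 g" by (simp add: flat_def)

lemma flat_Suc: "flat (Suc n) g \<longleftrightarrow> g (0, 0) = 0 \<and> (\<forall>b. flat n (pd b g))"
proof
  assume H: "flat (Suc n) g"
  show "g (0, 0) = 0 \<and> (\<forall>b. flat n (pd b g))"
  proof
    show "g (0, 0) = 0" using H[unfolded flat_def, rule_format, of "[]"] by simp
    show "\<forall>b. flat n (pd b g)" unfolding flat_def
    proof (intro allI impI)
      fix b and bs :: "bool list" assume "length bs < n"
      then show "pds bs (pd b g) (0, 0) = 0"
        using H[unfolded flat_def, rule_format, of "bs @ [b]"] by (simp add: pds_snoc)
    qed
  qed
next
  assume H: "g (0, 0) = 0 \<and> (\<forall>b. flat n (pd b g))"
  show "flat (Suc n) g" unfolding flat_def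
  proof (intro allI impI)
    fix bs :: "bool list" assume L: "length bs < Suc n"
    show "pds bs g (0, 0) = 0"
    proof (cases bs rule: rev_cases)
      case Nil then show ?thesis using H by simp
    next
      case (snoc ys y) then show ?thesis using H L unfolding flat_def by (simp add: pds_snoc)
    qed
  qed
qed

lemma flat_mono: "flat n g \<Longrightarrow> m \<le> n \<Longrightarrow> flat m g"
  unfolding flat_def by auto

lemma flat_cong:
  assumes "open U" "(0, 0) \<in> U" "\<And>x. x \<in> U \<Longrightarrow> g x = h x" "flat n g"
  shows "flat n h"
  unfolding flat_def
proof (intro allI impI)
  fix bs :: "bool list" assume "length bs < n"
  then have "pds bs g (0, 0) = 0" using assms(4) unfolding flat_def by blast
  then show "pds bs h (0, 0) = 0" using pds_local[OF assms(1,2,3)] by simp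
qed

lemma flat_add:
  assumes U: "open U" "(0, 0) \<in> U"
  shows "smooth2_on U g \<Longrightarrow> smooth2_on U h \<Longrightarrow> flat n g \<Longrightarrow> flat n h \<Longrightarrow> flat n (\<lambda>z. g z + h z)"
proof (induction n arbitrary: g h)
  case 0 then show ?case by simp
next
  case (Suc n)
  have "flat n (pd b (\<lambda>z. g z + h z))" for b
  proof (rule flat_cong[OF U])
    show "flat n (\<lambda>z. pd b g z + pd b h z)"
      using Suc.IH[OF sm_pd[OF Suc.prems(1)] sm_pd[OF Suc.prems(2)]] Suc.prems(3,4) by (simp add: flat_Suc)
    show "x \<in> U \<Longrightarrow> pd b g x + pd b h x = pd b (\<lambda>z. g z + h z) x" for x
      using pd_add[OF sm_diffble[OF Suc.prems(1)] sm_diffble[OF Suc.prems(2)]] by simp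
  qed
  then show ?case using Suc.prems by (simp add: flat_Suc)
qed

lemma flat_diff:
  assumes U: "open U" "(0, 0) \<in> U"
  shows "smooth2_on U g \<Longrightarrow> smooth2_on U h \<Longrightarrow> flat n g \<Longrightarrow> flat n h \<Longrightarrow> flat n (\<lambda>z. g z - h z)"
proof (induction n arbitrary: g h)
  case 0 then show ?case by simp
next
  case (Suc n)
  have "flat n (pd b (\<lambda>z. g z - h z))" for b
  proof (rule flat_cong[OF U])
    show "flat n (\<lambda>z. pd b g z - pd b h z)"
      using Suc.IH[OF sm_pd[OF Suc.prems(1)] sm_pd[OF Suc.prems(2)]] Suc.prems(3,4) by (simp add: flat_Suc)
    show "x \<in> U \<Longrightarrow> pd b g x - pd b h x = pd b (\<lambda>z. g z - h z) x" for x
      using pd_diff[OF sm_diffble[OF Suc.prems(1)] sm_diffble[OF Suc.prems(2)]] by simp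
  qed
  then show ?case using Suc.prems by (simp add: flat_Suc)
qed

lemma flat_bil_aux:
  fixes P :: "'a::real_normed_vector \<Rightarrow> 'b::real_normed_vector \<Rightarrow> 'c::real_normed_vector"
  assumes bb: "bounded_bilinear P" and U: "open U" "(0, 0) \<in> U"
  shows "\<forall>n m (g :: real \<times> real \<Rightarrow> 'a) (h :: real \<times> real \<Rightarrow> 'b). n + m = N \<longrightarrow> smooth2_on U g \<longrightarrow> smooth2_on U h \<longrightarrow> flat n g \<longrightarrow> flat m h \<longrightarrow>
           flat N (\<lambda>z. P (g z) (h z))"
proof (induction N)
  case 0 then show ?case by simp
next
  case (Suc N)
  show ?case
  proof (intro allI impI)
    fix n m and g :: "real \<times> real \<Rightarrow> 'a" and h :: "real \<times> real \<Rightarrow> 'b"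
    assume nm: "n + m = Suc N" and g: "smooth2_on U g" and h: "smooth2_on U h" and fg: "flat n g" and fh: "flat m h"
    have v0: "P (g (0, 0)) (h (0, 0)) = 0"
    proof (cases n)
      case 0 then have "h (0, 0) = 0" using nm fh by (simp add: flat_Suc)
      then show ?thesis by (simp add: bounded_bilinear.zero_right[OF bb])
    next
      case (Suc n') then have "g (0, 0) = 0" using fg by (simp add: flat_Suc)
      then show ?thesis by (simp add: bounded_bilinear.zero_left[OF bb])
    qed
    have A: "flat N (\<lambda>z. P (pd b g z) (h z))" for b
    proof (cases n)
      case 0
      then have "flat N h" using nm fh flat_mono[of m h N] by simp
      then show ?thesis using Suc.IH[rule_format, of 0 N "pd b g" h] sm_pd[OF g] h by simp
    next
      case (Suc n')
      then have "flat n' (pd b g)" using fg by (simp add: flat_Suc)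
      then show ?thesis using Suc.IH[rule_format, of n' m "pd b g" h] sm_pd[OF g] h fh nm \<open>n = Suc n'\<close> by simp
    qed
    have B: "flat N (\<lambda>z. P (g z) (pd b h z))" for b
    proof (cases m)
      case 0
      then have "flat N g" using nm fg flat_mono[of n g N] by simp
      then show ?thesis using Suc.IH[rule_format, of N 0 g "pd b h"] sm_pd[OF h] g by simp
    next
      case (Suc m')
      then have "flat m' (pd b h)" using fh by (simp add: flat_Suc)
      then show ?thesis using Suc.IH[rule_format, of n m' g "pd b h"] sm_pd[OF h] g fg nm \<open>m = Suc m'\<close> by simp
    qed
    have "flat N (pd b (\<lambda>z. P (g z) (h z)))" for b
    proof (rule flat_cong[OF U])
      show "flat N (\<lambda>z. P (pd b g z) (h z) + P (g z) (pd b h z))"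
        using flat_add[OF U sm_bil[OF bb U(1) sm_pd[OF g] h] sm_bil[OF bb U(1) g sm_pd[OF h]] A B] .
      show "x \<in> U \<Longrightarrow> P (pd b g x) (h x) + P (g x) (pd b h x) = pd b (\<lambda>z. P (g z) (h z)) x" for x
        using pd_bil[OF bb sm_diffble[OF g] sm_diffble[OF h]] by simp
    qed
    then show "flat (Suc N) (\<lambda>z. P (g z) (h z))" using v0 by (simp add: flat_Suc)
  qed
qed

lemma flat_bil:
  assumes "bounded_bilinear P" "open U" "(0, 0) \<in> U" "smooth2_on U g" "smooth2_on U h" "flat n g" "flat m h"
  shows "flat (n + m) (\<lambda>z. P (g z) (h z))"
  using flat_bil_aux[OF assms(1-3), of "n + m", rule_format, OF refl assms(4-7)] .

lemma jet_zero:
  fixes G :: "real \<times> real \<Rightarrow> 'a::euclidean_space"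
  assumes U: "open U" "(0, 0) \<in> U" and sm: "smooth2_on U G"
  shows "jet_eq (0, 0) m G (\<lambda>z. 0) \<longleftrightarrow> flat (Suc m) G"
proof
  assume H: "jet_eq (0, 0) m G (\<lambda>z. 0)"
  show "flat (Suc m) G" unfolding flat_def
  proof (intro allI impI)
    fix bs :: "bool list" assume "length bs < Suc m"
    then have "nF bs + nT bs \<le> m" using nF_nT[of bs] by simp
    then show "pds bs G (0, 0) = 0"
      using H canon[OF U(1) sm U(2), of bs] unfolding jet_eq_def by (simp add: pds_const)
  qed
next
  assume H: "flat (Suc m) G"
  show "jet_eq (0, 0) m G (\<lambda>z. 0)" unfolding jet_eq_def
    using H unfolding flat_def by (simp add: pds_const)
qed

lemma br_id: "(bracket3 a b c) *\<^sub>R x = (x \<bullet> a) *\<^sub>R cross3 b c + (x \<bullet> b) *\<^sub>R cross3 c a + (x \<bullet> c) *\<^sub>R cross3 a b"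
  unfolding bracket3_def by (simp add: cross3_simps forall_3)

lemma br_uniq:
  assumes "bracket3 a b c \<noteq> 0" "x \<bullet> a = 0" "x \<bullet> b = 0" "x \<bullet> c = 0"
  shows "x = 0"
  using br_id[of a b c x] assms by simp

lemma br_cross: "bracket3 (cross3 a b) (cross3 b c) (cross3 c a) = (bracket3 a b c)^2"
  unfolding bracket3_def by (simp add: cross3_simps power2_eq_square)

lemma cross_dot1: "cross3 a b \<bullet> c = bracket3 a b c"
  unfolding bracket3_def by (simp add: cross3_simps)
lemma cross_dot2: "cross3 b c \<bullet> a = bracket3 a b c"
  unfolding bracket3_def by (simp add: cross3_simps)
lemma cross_dot3: "cross3 c a \<bullet> b = bracket3 a b c"
  unfolding bracket3_def by (simp add: cross3_simps)

lemma br_lin: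
  "bracket3 (x + y) b c = bracket3 x b c + bracket3 y b c"
  "bracket3 (x - y) b c = bracket3 x b c - bracket3 y b c"
  "bracket3 (- x) b c = - bracket3 x b c"
  "bracket3 (s *\<^sub>R x) b c = s * bracket3 x b c"
  "bracket3 a (x + y) c = bracket3 a x c + bracket3 a y c"
  "bracket3 a (x - y) c = bracket3 a x c - bracket3 a y c"
  "bracket3 a (- x) c = - bracket3 a x c"
  "bracket3 a (s *\<^sub>R x) c = s * bracket3 a x c"
  "bracket3 a b (x + y) = bracket3 a b x + bracket3 a b y"
  "bracket3 a b (x - y) = bracket3 a b x - bracket3 a b y"
  "bracket3 a b (- x) = - bracket3 a b x"
  "bracket3 a b (s *\<^sub>R x) = s * bracket3 a b x"
  "bracket3 a a c = 0" "bracket3 a b a = 0" "bracket3 a b b = 0"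
  unfolding bracket3_def by (simp_all add: cross3_simps)


lemma pd_minus:
  assumes "g differentiable (at z)"
  shows "pd b (\<lambda>z. - g z) z = - pd b g z"
  unfolding pd_alt[of b "\<lambda>z. - g z"]
  by (rule vector_derivative_at, rule has_vector_derivative_minus[OF pd_has[OF assms]])

lemma pd_scaleR_const:
  assumes "g differentiable (at z)"
  shows "pd b (\<lambda>z. c *\<^sub>R g z) z = c *\<^sub>R pd b g z"
  using pd_bil[OF bounded_bilinear_scaleR differentiable_const[of c] assms] by simp

lemma pd_diff_const:
  assumes "g differentiable (at z)"
  shows "pd b (\<lambda>z. g z - c) z = pd b g z"
  using pd_diff[OF assms differentiable_const[of c]] by simp

lemma pd_inner_zero:
  assumes U: "open U" "z \<in> U" and g: "smooth2_on U g" and h: "smooth2_on U h"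
    and c: "\<And>x. x \<in> U \<Longrightarrow> g x \<bullet> h x = c"
  shows "pd b g z \<bullet> h z + g z \<bullet> pd b h z = 0"
proof -
  have "pd b (\<lambda>x. g x \<bullet> h x) z = pd b (\<lambda>x. c) z" using pd_local[OF U c] .
  then show ?thesis
    using pd_bil[OF bounded_bilinear_inner sm_diffble[OF g U(2)] sm_diffble[OF h U(2)]] by simp
qed

lemma sm_minus:
  fixes g :: "real \<times> real \<Rightarrow> 'a::real_normed_vector"
  assumes "open U" "smooth2_on U g" shows "smooth2_on U (\<lambda>z. - g z)"
proof -
  have "smooth2_on U (\<lambda>z. (0::'a) - g z)" using sm_diff[OF assms(1) sm_const assms(2)] .
  then show ?thesis by simp
qed

lemma flat_const_mult:
  fixes g :: "real \<times> real \<Rightarrow> real"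
  assumes "open U" "(0, 0) \<in> U" "smooth2_on U g" "flat n g"
  shows "flat n (\<lambda>z. c * g z)"
  using flat_bil[OF bounded_bilinear_mult assms(1,2) sm_const assms(3) flat_0 assms(4), of c] by simp

lemma flat_one: "g (0, 0) = 0 \<Longrightarrow> flat (Suc 0) g"
  by (simp add: flat_Suc)

lemma flat_ext: "flat n g \<Longrightarrow> (\<And>x. g x = h x) \<Longrightarrow> flat n h"
proof -
  assume "flat n g" "\<And>x. g x = h x"
  then have "g = h" by (simp add: fun_eq_iff)
  then show ?thesis using \<open>flat n g\<close> by simp
qed

lemma sm_cong2: "smooth2_on U g \<Longrightarrow> open U \<Longrightarrow> (\<And>x. x \<in> U \<Longrightarrow> h x = g x) \<Longrightarrow> smooth2_on U h"
  using sm_cong[of U g h] by metis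

theorem proposition4p4:
  fixes U :: "(real \<times> real) set"
    and f \<xi> \<nu> :: "real \<times> real \<Rightarrow> real^3"
    and \<rho> b11 b12 b22 :: "real \<times> real \<Rightarrow> real"
    and \<Gamma>11u \<Gamma>11v \<Gamma>12u \<Gamma>12v \<Gamma>22u \<Gamma>22v :: "real \<times> real \<Rightarrow> real"
    and k :: nat
  assumes U_open: "open U" and U0: "(0, 0) \<in> U"
    and f_smooth: "smooth2_on U f" and \<xi>_smooth: "smooth2_on U \<xi>"
    \<comment> \<open>transversality of \<xi> (in particular f is an immersion)\<close>
    and transversal: "\<And>z. z \<in> U \<Longrightarrow> bracket3 (du f z) (dv f z) (\<xi> z) \<noteq> 0"
    \<comment> \<open>structure equations D_X f_* Y = f_*(nabla_X Y) + h(X,Y) xi in isothermal coordinates: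
        h(du,du) = h(dv,dv) = rho, h(du,dv) = 0\<close>
    and Gauss_uu: "\<And>z. z \<in> U \<Longrightarrow> du (du f) z = \<Gamma>11u z *\<^sub>R du f z + \<Gamma>11v z *\<^sub>R dv f z + \<rho> z *\<^sub>R \<xi> z"
    and Gauss_uv: "\<And>z. z \<in> U \<Longrightarrow> dv (du f) z = \<Gamma>12u z *\<^sub>R du f z + \<Gamma>12v z *\<^sub>R dv f z"
    and Gauss_vv: "\<And>z. z \<in> U \<Longrightarrow> dv (dv f) z = \<Gamma>22u z *\<^sub>R du f z + \<Gamma>22v z *\<^sub>R dv f z + \<rho> z *\<^sub>R \<xi> z"
    \<comment> \<open>h positive definite\<close>
    and \<rho>_pos: "\<And>z. z \<in> U \<Longrightarrow> \<rho> z > 0"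
    \<comment> \<open>equiaffine (tau = 0) Weingarten equations defining the shape operator B\<close>
    and Weingarten_u: "\<And>z. z \<in> U \<Longrightarrow> du \<xi> z = - (b11 z *\<^sub>R du f z) - b12 z *\<^sub>R dv f z"
    and Weingarten_v: "\<And>z. z \<in> U \<Longrightarrow> dv \<xi> z = - (b12 z *\<^sub>R du f z) - b22 z *\<^sub>R dv f z"
    \<comment> \<open>co-normal\<close>
    and conormal: "\<And>z. z \<in> U \<Longrightarrow> \<nu> z \<bullet> du f z = 0 \<and> \<nu> z \<bullet> dv f z = 0 \<and> \<nu> z \<bullet> \<xi> z = 1"
    \<comment> \<open>(0,0) is an umbilical point of order at least k\<close>
    and k_pos: "k \<ge> 1"
    and umbilic: "b11 (0, 0) = b22 (0, 0)" "b12 (0, 0) = 0"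
    and order_k: "jet_eq (0, 0) (k - 1) (\<lambda>z. (b11 z - b22 z, 2 * b12 z)) (\<lambda>z. (0, 0))"
    and lam0_nz: "b11 (0, 0) \<noteq> 0"
  shows "let lam0 = b11 (0, 0);
             q0 = f (0, 0) + (1 / lam0) *\<^sub>R \<xi> (0, 0);
             p = (\<lambda>z. \<nu> z \<bullet> (f z - q0));
             PP = (\<lambda>z. (du (du p) z - dv (dv p) z, 2 * dv (du p) z));
             BB = (\<lambda>z. (b11 z - b22 z, 2 * b12 z));
             \<delta> = (\<lambda>z. bracket3 (du f z) (dv f z) (\<xi> z) * bracket3 (\<nu> z) (du \<nu> z) (dv \<nu> z) / \<rho> z);
             \<delta>0 = \<delta> (0, 0)
         in jet_eq (0, 0) k PP (\<lambda>z. (\<delta>0 / lam0) *\<^sub>R BB z)"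
proof -
  note U = U_open U0
  define fu where "fu = du f"
  define fv where "fv = dv f"
  define fuu where "fuu = du fu"
  define fuv where "fuv = dv fu"
  define fvu where "fvu = du fv"
  define fvv where "fvv = dv fv"
  define xu where "xu = du \<xi>"
  define xv where "xv = dv \<xi>"
  have smfu: "smooth2_on U fu" and smfv: "smooth2_on U fv"
    unfolding fu_def fv_def using sm_pd[OF f_smooth] by auto
  have smfuu: "smooth2_on U fuu" and smfuv: "smooth2_on U fuv" and smfvu: "smooth2_on U fvu" and smfvv: "smooth2_on U fvv"
    unfolding fuu_def fuv_def fvu_def fvv_def using sm_pd smfu smfv by auto
  have smxu: "smooth2_on U xu" and smxv: "smooth2_on U xv"
    unfolding xu_def xv_def using sm_pd[OF \<xi>_smooth] by auto
  have fvu_eq: "fvu z = fuv z" if "z \<in> U" for z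
    unfolding fvu_def fuv_def fu_def fv_def using schwarz[OF U_open f_smooth that] by simp
  have Guu: "fuu z = \<Gamma>11u z *\<^sub>R fu z + \<Gamma>11v z *\<^sub>R fv z + \<rho> z *\<^sub>R \<xi> z" if "z \<in> U" for z
    unfolding fuu_def fu_def fv_def by (rule Gauss_uu[OF that])
  have Guv: "fuv z = \<Gamma>12u z *\<^sub>R fu z + \<Gamma>12v z *\<^sub>R fv z" if "z \<in> U" for z
    unfolding fuv_def fu_def fv_def by (rule Gauss_uv[OF that])
  have Gvv: "fvv z = \<Gamma>22u z *\<^sub>R fu z + \<Gamma>22v z *\<^sub>R fv z + \<rho> z *\<^sub>R \<xi> z" if "z \<in> U" for z
    unfolding fvv_def fu_def fv_def by (rule Gauss_vv[OF that])
  have Wu: "xu z = - (b11 z *\<^sub>R fu z) - b12 z *\<^sub>R fv z" if "z \<in> U" for z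
    unfolding xu_def fu_def fv_def by (rule Weingarten_u[OF that])
  have Wv: "xv z = - (b12 z *\<^sub>R fu z) - b22 z *\<^sub>R fv z" if "z \<in> U" for z
    unfolding xv_def fu_def fv_def by (rule Weingarten_v[OF that])
  have cn: "\<nu> z \<bullet> fu z = 0" "\<nu> z \<bullet> fv z = 0" "\<nu> z \<bullet> \<xi> z = 1" if "z \<in> U" for z
    unfolding fu_def fv_def using conormal[OF that] by auto
  define D where "D = (\<lambda>z. bracket3 (fu z) (fv z) (\<xi> z))"
  have Dnz: "D z \<noteq> 0" if "z \<in> U" for z
    unfolding D_def fu_def fv_def using transversal[OF that] .
  have smD: "smooth2_on U D"
    unfolding D_def by (rule sm_bracket[OF U_open smfu smfv \<xi>_smooth])
  have smdivD: "smooth2_on U (\<lambda>z. g z / D z)" if "smooth2_on U g" for g :: "real \<times> real \<Rightarrow> real"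
    using sm_divide[OF U_open that smD Dnz] by blast
  have nu_eq: "\<nu> z = (1 / D z) *\<^sub>R cross3 (fu z) (fv z)" if z: "z \<in> U" for z
  proof -
    have "\<nu> z - (1 / D z) *\<^sub>R cross3 (fu z) (fv z) = 0"
    proof (rule br_uniq[OF Dnz[OF z, unfolded D_def]])
      show "(\<nu> z - (1 / D z) *\<^sub>R cross3 (fu z) (fv z)) \<bullet> fu z = 0"
        using cn[OF z] by (simp add: inner_diff_left cross_dot1 br_lin)
      show "(\<nu> z - (1 / D z) *\<^sub>R cross3 (fu z) (fv z)) \<bullet> fv z = 0"
        using cn[OF z] by (simp add: inner_diff_left cross_dot1 br_lin)
      show "(\<nu> z - (1 / D z) *\<^sub>R cross3 (fu z) (fv z)) \<bullet> \<xi> z = 0"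
        using cn[OF z] Dnz[OF z] by (simp add: inner_diff_left cross_dot1 D_def)
    qed
    then show ?thesis by simp
  qed
  have smnu: "smooth2_on U \<nu>"
    by (rule sm_cong2[of U "\<lambda>z. (1 / D z) *\<^sub>R cross3 (fu z) (fv z)"]) (intro sm_scaleR smdivD sm_cross U_open sm_const smfu smfv, rule U_open, simp add: nu_eq)
  have rho_eq: "\<rho> z = \<nu> z \<bullet> fuu z" if z: "z \<in> U" for z
    using Guu[OF z] cn[OF z] by (simp add: inner_add_right)
  have smrho: "smooth2_on U \<rho>"
    by (rule sm_cong2[of U "\<lambda>z. \<nu> z \<bullet> fuu z"]) (rule sm_inner[OF U_open smnu smfuu], rule U_open, simp add: rho_eq)
  have nu_fuv: "\<nu> z \<bullet> fuv z = 0" if z: "z \<in> U" for z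
    using Guv[OF z] cn[OF z] by (simp add: inner_add_right)
  have nu_fvu: "\<nu> z \<bullet> fvu z = 0" if z: "z \<in> U" for z
    using nu_fuv[OF z] fvu_eq[OF z] by simp
  have nu_fvv: "\<nu> z \<bullet> fvv z = \<rho> z" if z: "z \<in> U" for z
    using Gvv[OF z] cn[OF z] by (simp add: inner_add_right)
  have nu_xu: "\<nu> z \<bullet> xu z = 0" if z: "z \<in> U" for z
    using Wu[OF z] cn[OF z] by (simp add: inner_diff_right)
  have nu_xv: "\<nu> z \<bullet> xv z = 0" if z: "z \<in> U" for z
    using Wv[OF z] cn[OF z] by (simp add: inner_diff_right)
  have b11_eq: "b11 z = - bracket3 (xu z) (fv z) (\<xi> z) / D z" if z: "z \<in> U" for z
  proof -
    have "bracket3 (xu z) (fv z) (\<xi> z) = - b11 z * D z" unfolding Wu[OF z] by (simp add: br_lin D_def)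
    then show ?thesis using Dnz[OF z] by simp
  qed
  have b12_eq: "b12 z = - bracket3 (fu z) (xu z) (\<xi> z) / D z" if z: "z \<in> U" for z
  proof -
    have "bracket3 (fu z) (xu z) (\<xi> z) = - b12 z * D z" unfolding Wu[OF z] by (simp add: br_lin D_def)
    then show ?thesis using Dnz[OF z] by simp
  qed
  have b22_eq: "b22 z = - bracket3 (fu z) (xv z) (\<xi> z) / D z" if z: "z \<in> U" for z
  proof -
    have "bracket3 (fu z) (xv z) (\<xi> z) = - b22 z * D z" unfolding Wv[OF z] by (simp add: br_lin D_def)
    then show ?thesis using Dnz[OF z] by simp
  qed
  have smb11: "smooth2_on U b11"
    by (rule sm_cong2[of U "\<lambda>z. - bracket3 (xu z) (fv z) (\<xi> z) / D z"]) (intro smdivD sm_minus sm_bracket U_open smxu smfv \<xi>_smooth, rule U_open, simp add: b11_eq)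
  have smb12: "smooth2_on U b12"
    by (rule sm_cong2[of U "\<lambda>z. - bracket3 (fu z) (xu z) (\<xi> z) / D z"]) (intro smdivD sm_minus sm_bracket U_open smxu smfu \<xi>_smooth, rule U_open, simp add: b12_eq)
  have smb22: "smooth2_on U b22"
    by (rule sm_cong2[of U "\<lambda>z. - bracket3 (fu z) (xv z) (\<xi> z) / D z"]) (intro smdivD sm_minus sm_bracket U_open smxv smfu \<xi>_smooth, rule U_open, simp add: b22_eq)
  define nu where "nu = \<nu>"
  define nuu where "nuu = du \<nu>"
  define nuv where "nuv = dv \<nu>"
  have smnuu: "smooth2_on U nuu" and smnuv: "smooth2_on U nuv"
    unfolding nuu_def nuv_def using sm_pd[OF smnu] by auto
  have smnuuu: "smooth2_on U (du nuu)" and smnuuv: "smooth2_on U (dv nuu)" and smnuvv: "smooth2_on U (dv nuv)"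
    using sm_pd smnuu smnuv by auto
  have E1: "nuu z \<bullet> fu z = - \<rho> z" if z: "z \<in> U" for z
    using pd_inner_zero[OF U_open z smnu smfu, of 0 False] cn rho_eq[OF z]
    unfolding nuu_def fuu_def by simp
  have E2: "nuu z \<bullet> fv z = 0" if z: "z \<in> U" for z
    using pd_inner_zero[OF U_open z smnu smfv, of 0 False] cn nu_fvu[OF z]
    unfolding nuu_def fvu_def by simp
  have E3: "nuv z \<bullet> fu z = 0" if z: "z \<in> U" for z
    using pd_inner_zero[OF U_open z smnu smfu, of 0 True] cn nu_fuv[OF z]
    unfolding nuv_def fuv_def by simp
  have E4: "nuv z \<bullet> fv z = - \<rho> z" if z: "z \<in> U" for z
    using pd_inner_zero[OF U_open z smnu smfv, of 0 True] cn nu_fvv[OF z]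
    unfolding nuv_def fvv_def by simp
  have E5: "nuu z \<bullet> \<xi> z = 0" if z: "z \<in> U" for z
    using pd_inner_zero[OF U_open z smnu \<xi>_smooth, of 1 False] cn nu_xu[OF z]
    unfolding nuu_def xu_def by simp
  have E6: "nuv z \<bullet> \<xi> z = 0" if z: "z \<in> U" for z
    using pd_inner_zero[OF U_open z smnu \<xi>_smooth, of 1 True] cn nu_xv[OF z]
    unfolding nuv_def xv_def by simp
  have E7: "du nuu z \<bullet> \<xi> z = - b11 z * \<rho> z" if z: "z \<in> U" for z
  proof -
    have "du nuu z \<bullet> \<xi> z + nuu z \<bullet> xu z = 0"
      using pd_inner_zero[OF U_open z smnuu \<xi>_smooth E5, of False] unfolding xu_def by simp
    moreover have "nuu z \<bullet> xu z = b11 z * \<rho> z"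
      unfolding Wu[OF z] using E1[OF z] E2[OF z] by (simp add: inner_diff_right)
    ultimately show ?thesis by simp
  qed
  have E8: "dv nuu z \<bullet> \<xi> z = - b12 z * \<rho> z" if z: "z \<in> U" for z
  proof -
    have "dv nuu z \<bullet> \<xi> z + nuu z \<bullet> xv z = 0"
      using pd_inner_zero[OF U_open z smnuu \<xi>_smooth E5, of True] unfolding xv_def by simp
    moreover have "nuu z \<bullet> xv z = b12 z * \<rho> z"
      unfolding Wv[OF z] using E1[OF z] E2[OF z] by (simp add: inner_diff_right)
    ultimately show ?thesis by simp
  qed
  have E9: "dv nuv z \<bullet> \<xi> z = - b22 z * \<rho> z" if z: "z \<in> U" for z
  proof -
    have "dv nuv z \<bullet> \<xi> z + nuv z \<bullet> xv z = 0"
      using pd_inner_zero[OF U_open z smnuv \<xi>_smooth E6, of True] unfolding xv_def by simp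
    moreover have "nuv z \<bullet> xv z = b22 z * \<rho> z"
      unfolding Wv[OF z] using E3[OF z] E4[OF z] by (simp add: inner_diff_right)
    ultimately show ?thesis by simp
  qed
  define z0 :: "real \<times> real" where "z0 = (0, 0)"
  have z0U: "z0 \<in> U" unfolding z0_def by (rule U0)
  have nuu0: "nuu z0 = - (\<rho> z0 / D z0) *\<^sub>R cross3 (fv z0) (\<xi> z0)"
  proof -
    have "nuu z0 + (\<rho> z0 / D z0) *\<^sub>R cross3 (fv z0) (\<xi> z0) = 0"
    proof (rule br_uniq[OF Dnz[OF z0U, unfolded D_def]])
      show "(nuu z0 + (\<rho> z0 / D z0) *\<^sub>R cross3 (fv z0) (\<xi> z0)) \<bullet> fu z0 = 0"
        using E1[OF z0U] Dnz[OF z0U] by (simp add: inner_add_left cross_dot2 D_def)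
      show "(nuu z0 + (\<rho> z0 / D z0) *\<^sub>R cross3 (fv z0) (\<xi> z0)) \<bullet> fv z0 = 0"
        using E2[OF z0U] by (simp add: inner_add_left cross_dot2 br_lin)
      show "(nuu z0 + (\<rho> z0 / D z0) *\<^sub>R cross3 (fv z0) (\<xi> z0)) \<bullet> \<xi> z0 = 0"
        using E5[OF z0U] by (simp add: inner_add_left cross_dot1 br_lin)
    qed
    then show ?thesis by (simp add: eq_neg_iff_add_eq_0)
  qed
  have nuv0: "nuv z0 = - (\<rho> z0 / D z0) *\<^sub>R cross3 (\<xi> z0) (fu z0)"
  proof -
    have "nuv z0 + (\<rho> z0 / D z0) *\<^sub>R cross3 (\<xi> z0) (fu z0) = 0"
    proof (rule br_uniq[OF Dnz[OF z0U, unfolded D_def]])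
      show "(nuv z0 + (\<rho> z0 / D z0) *\<^sub>R cross3 (\<xi> z0) (fu z0)) \<bullet> fu z0 = 0"
        using E3[OF z0U] by (simp add: inner_add_left cross_dot1 br_lin)
      show "(nuv z0 + (\<rho> z0 / D z0) *\<^sub>R cross3 (\<xi> z0) (fu z0)) \<bullet> fv z0 = 0"
        using E4[OF z0U] Dnz[OF z0U] by (simp add: inner_add_left cross_dot3 D_def)
      show "(nuv z0 + (\<rho> z0 / D z0) *\<^sub>R cross3 (\<xi> z0) (fu z0)) \<bullet> \<xi> z0 = 0"
        using E6[OF z0U] by (simp add: inner_add_left cross_dot2 br_lin)
    qed
    then show ?thesis by (simp add: eq_neg_iff_add_eq_0)
  qed
  have delta0: "bracket3 (fu z0) (fv z0) (\<xi> z0) * bracket3 (\<nu> z0) (nuu z0) (nuv z0) / \<rho> z0 = \<rho> z0"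
  proof -
    have "bracket3 (\<nu> z0) (nuu z0) (nuv z0)
        = (1 / D z0) * (\<rho> z0 / D z0) * (\<rho> z0 / D z0) * bracket3 (cross3 (fu z0) (fv z0)) (cross3 (fv z0) (\<xi> z0)) (cross3 (\<xi> z0) (fu z0))"
      unfolding nuu0 nuv0 nu_eq[OF z0U] by (simp add: br_lin)
    also have "\<dots> = (1 / D z0) * (\<rho> z0 / D z0) * (\<rho> z0 / D z0) * (D z0)^2"
      unfolding br_cross D_def ..
    finally have "bracket3 (\<nu> z0) (nuu z0) (nuv z0) = \<rho> z0 * \<rho> z0 / D z0"
      using Dnz[OF z0U] by (simp add: power2_eq_square)
    then show ?thesis using Dnz[OF z0U] \<rho>_pos[OF z0U] unfolding D_def by simp
  qed
  define lam where "lam = b11 (0, 0)"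
  have lamnz: "lam \<noteq> 0" using lam0_nz unfolding lam_def .
  define q0 where "q0 = f (0, 0) + (1 / lam) *\<^sub>R \<xi> (0, 0)"
  define p where "p = (\<lambda>z. \<nu> z \<bullet> (f z - q0))"
  have smw: "smooth2_on U (\<lambda>z. f z - q0)" by (rule sm_diff[OF U_open f_smooth sm_const])
  have smp: "smooth2_on U p" unfolding p_def by (rule sm_inner[OF U_open smnu smw])
  have pdwu: "pd False (\<lambda>z. f z - q0) z = fu z" and pdwv: "pd True (\<lambda>z. f z - q0) z = fv z" if z: "z \<in> U" for z
    unfolding fu_def fv_def using pd_diff_const[OF sm_diffble[OF f_smooth z]] by auto
  have dup: "du p z = nuu z \<bullet> (f z - q0)" if z: "z \<in> U" for z
    unfolding p_def using pd_bil[OF bounded_bilinear_inner sm_diffble[OF smnu z] sm_diffble[OF smw z], of False]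
      pdwu[OF z] cn[OF z] unfolding nuu_def by simp
  have dvp: "dv p z = nuv z \<bullet> (f z - q0)" if z: "z \<in> U" for z
    unfolding p_def using pd_bil[OF bounded_bilinear_inner sm_diffble[OF smnu z] sm_diffble[OF smw z], of True]
      pdwv[OF z] cn[OF z] unfolding nuv_def by simp
  have duup: "du (du p) z = du nuu z \<bullet> (f z - q0) - \<rho> z" if z: "z \<in> U" for z
  proof -
    have "du (du p) z = du (\<lambda>z. nuu z \<bullet> (f z - q0)) z" using pd_local[OF U_open z dup] .
    also have "\<dots> = du nuu z \<bullet> (f z - q0) + nuu z \<bullet> fu z"
      using pd_bil[OF bounded_bilinear_inner sm_diffble[OF smnuu z] sm_diffble[OF smw z], of False] pdwu[OF z] by simp
    finally show ?thesis using E1[OF z] by simp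
  qed
  have dvup: "dv (du p) z = dv nuu z \<bullet> (f z - q0)" if z: "z \<in> U" for z
  proof -
    have "dv (du p) z = dv (\<lambda>z. nuu z \<bullet> (f z - q0)) z" using pd_local[OF U_open z dup] .
    also have "\<dots> = dv nuu z \<bullet> (f z - q0) + nuu z \<bullet> fv z"
      using pd_bil[OF bounded_bilinear_inner sm_diffble[OF smnuu z] sm_diffble[OF smw z], of True] pdwv[OF z] by simp
    finally show ?thesis using E2[OF z] by simp
  qed
  have dvvp: "dv (dv p) z = dv nuv z \<bullet> (f z - q0) - \<rho> z" if z: "z \<in> U" for z
  proof -
    have "dv (dv p) z = dv (\<lambda>z. nuv z \<bullet> (f z - q0)) z" using pd_local[OF U_open z dvp] .
    also have "\<dots> = dv nuv z \<bullet> (f z - q0) + nuv z \<bullet> fv z"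
      using pd_bil[OF bounded_bilinear_inner sm_diffble[OF smnuv z] sm_diffble[OF smw z], of True] pdwv[OF z] by simp
    finally show ?thesis using E4[OF z] by simp
  qed
  define g where "g = (\<lambda>z. f z + (1 / lam) *\<^sub>R \<xi> z - q0)"
  have smg: "smooth2_on U g" unfolding g_def
    by (intro sm_diff sm_add sm_scaleR U_open f_smooth \<xi>_smooth sm_const)
  have w_eq: "f z - q0 = g z - (1 / lam) *\<^sub>R \<xi> z" for z by (simp add: g_def)
  define BB where "BB = (\<lambda>z. (b11 z - b22 z, 2 * b12 z))"
  define c where "c = \<rho> z0 / lam"
  define E where "E = (\<lambda>z. ((du nuu z - dv nuv z) \<bullet> g z) *\<^sub>R (1::real, 0::real) + (2 * (dv nuu z \<bullet> g z)) *\<^sub>R (0::real, 1::real) + ((\<rho> z - \<rho> z0) / lam) *\<^sub>R BB z)"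
  define PP where "PP = (\<lambda>z. (du (du p) z - dv (dv p) z, 2 * dv (du p) z))"
  have PE: "PP z - c *\<^sub>R BB z = E z" if z: "z \<in> U" for z
  proof -
    have a1: "du nuu z \<bullet> (f z - q0) = du nuu z \<bullet> g z + b11 z * \<rho> z / lam"
      unfolding w_eq using E7[OF z] by (simp add: inner_diff_right)
    have a2: "dv nuv z \<bullet> (f z - q0) = dv nuv z \<bullet> g z + b22 z * \<rho> z / lam"
      unfolding w_eq using E9[OF z] by (simp add: inner_diff_right)
    have a3: "dv nuu z \<bullet> (f z - q0) = dv nuu z \<bullet> g z + b12 z * \<rho> z / lam"
      unfolding w_eq using E8[OF z] by (simp add: inner_diff_right)
    show ?thesis
      unfolding PP_def E_def BB_def c_def duup[OF z] dvvp[OF z] dvup[OF z] a1 a2 a3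
      by (simp add: inner_diff_left algebra_simps diff_divide_distrib add_divide_distrib)
  qed
  have smBB: "smooth2_on U BB"
    by (rule sm_cong2[of U "\<lambda>z. (b11 z - b22 z) *\<^sub>R (1::real, 0::real) + (2 * b12 z) *\<^sub>R (0::real, 1::real)"])
       (intro sm_add sm_scaleR sm_diff sm_mult U_open smb11 smb22 smb12 sm_const, rule U_open, simp add: BB_def)
  have FBB: "flat k BB"
  proof -
    have "jet_eq (0, 0) (k - 1) BB (\<lambda>z. 0)"
      using order_k unfolding BB_def by (simp add: zero_prod_def)
    then have "flat (Suc (k - 1)) BB" using jet_zero[OF U_open U0 smBB] by blast
    then show ?thesis using k_pos by simp
  qed
  have Fd: "flat k (\<lambda>z. b11 z - b22 z)"
  proof -
    have "flat (k + 0) (\<lambda>z. BB z \<bullet> (1::real, 0::real))"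
      using flat_bil[OF bounded_bilinear_inner U_open U0 smBB sm_const FBB flat_0] .
    then have "flat k (\<lambda>z. BB z \<bullet> (1::real, 0::real))" by simp
    then show ?thesis by (rule flat_ext) (simp add: BB_def inner_prod_def)
  qed
  have F12: "flat k b12"
  proof -
    have "flat (k + 0) (\<lambda>z. BB z \<bullet> (0::real, 1::real))"
      using flat_bil[OF bounded_bilinear_inner U_open U0 smBB sm_const FBB flat_0] .
    then have "flat k (\<lambda>z. BB z \<bullet> (0::real, 1::real))" by simp
    then have "flat k (\<lambda>z. (1/2) * (BB z \<bullet> (0::real, 1::real)))"
      by (rule flat_const_mult[OF U_open U0 sm_inner[OF U_open smBB sm_const]])
    then show ?thesis by (rule flat_ext) (simp add: BB_def inner_prod_def)
  qed
  obtain k' where kk: "k = Suc k'" using k_pos by (cases k) auto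
  have smxuv: "smooth2_on U (dv xu)" and smxvu: "smooth2_on U (du xv)"
    using sm_pd smxu smxv by auto
  have xi_sym: "dv xu z = du xv z" if z: "z \<in> U" for z
    unfolding xu_def xv_def using schwarz[OF U_open \<xi>_smooth z] .
  have smb11fu: "smooth2_on U (\<lambda>z. b11 z *\<^sub>R fu z)" and smb12fv: "smooth2_on U (\<lambda>z. b12 z *\<^sub>R fv z)"
   and smb12fu: "smooth2_on U (\<lambda>z. b12 z *\<^sub>R fu z)" and smb22fv: "smooth2_on U (\<lambda>z. b22 z *\<^sub>R fv z)"
    by (intro sm_scaleR U_open smb11 smb12 smb22 smfu smfv)+
  have dvxu: "dv xu z = - (dv b11 z *\<^sub>R fu z + b11 z *\<^sub>R fuv z) - (dv b12 z *\<^sub>R fv z + b12 z *\<^sub>R fvv z)"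
    if z: "z \<in> U" for z
  proof -
    have "dv xu z = dv (\<lambda>z. - (b11 z *\<^sub>R fu z) - b12 z *\<^sub>R fv z) z" using pd_local[OF U_open z Wu] .
    also have "\<dots> = dv (\<lambda>z. - (b11 z *\<^sub>R fu z)) z - dv (\<lambda>z. b12 z *\<^sub>R fv z) z"
      by (rule pd_diff[OF sm_diffble[OF sm_minus[OF U_open smb11fu] z] sm_diffble[OF smb12fv z]])
    also have "\<dots> = - dv (\<lambda>z. b11 z *\<^sub>R fu z) z - dv (\<lambda>z. b12 z *\<^sub>R fv z) z"
      using pd_minus[OF sm_diffble[OF smb11fu z]] by simp
    finally show ?thesis
      using pd_bil[OF bounded_bilinear_scaleR sm_diffble[OF smb11 z] sm_diffble[OF smfu z], of True]
        pd_bil[OF bounded_bilinear_scaleR sm_diffble[OF smb12 z] sm_diffble[OF smfv z], of True]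
      unfolding fuv_def fvv_def by simp
  qed
  have duxv: "du xv z = - (du b12 z *\<^sub>R fu z + b12 z *\<^sub>R fuu z) - (du b22 z *\<^sub>R fv z + b22 z *\<^sub>R fvu z)"
    if z: "z \<in> U" for z
  proof -
    have "du xv z = du (\<lambda>z. - (b12 z *\<^sub>R fu z) - b22 z *\<^sub>R fv z) z" using pd_local[OF U_open z Wv] .
    also have "\<dots> = du (\<lambda>z. - (b12 z *\<^sub>R fu z)) z - du (\<lambda>z. b22 z *\<^sub>R fv z) z"
      by (rule pd_diff[OF sm_diffble[OF sm_minus[OF U_open smb12fu] z] sm_diffble[OF smb22fv z]])
    also have "\<dots> = - du (\<lambda>z. b12 z *\<^sub>R fu z) z - du (\<lambda>z. b22 z *\<^sub>R fv z) z"
      using pd_minus[OF sm_diffble[OF smb12fu z]] by simp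
    finally show ?thesis
      using pd_bil[OF bounded_bilinear_scaleR sm_diffble[OF smb12 z] sm_diffble[OF smfu z], of False]
        pd_bil[OF bounded_bilinear_scaleR sm_diffble[OF smb22 z] sm_diffble[OF smfv z], of False]
      unfolding fuu_def fvu_def by simp
  qed
  define X1 where "X1 = (\<lambda>z. - bracket3 (fuv z) (fv z) (\<xi> z))"
  define X2 where "X2 = (\<lambda>z. bracket3 (fuu z) (fv z) (\<xi> z) - bracket3 (fvv z) (fv z) (\<xi> z))"
  define Y1 where "Y1 = (\<lambda>z. bracket3 (fu z) (fuv z) (\<xi> z))"
  define Y2 where "Y2 = (\<lambda>z. bracket3 (fu z) (fvv z) (\<xi> z) - bracket3 (fu z) (fuu z) (\<xi> z))"
  have smX1: "smooth2_on U X1" and smX2: "smooth2_on U X2" and smY1: "smooth2_on U Y1" and smY2: "smooth2_on U Y2"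
    unfolding X1_def X2_def Y1_def Y2_def
    by (intro sm_minus sm_diff sm_bracket U_open smfu smfv smfuu smfuv smfvv \<xi>_smooth)+
  have Cod1: "D z * (dv b11 z - du b12 z) = (b11 z - b22 z) * X1 z + b12 z * X2 z" if z: "z \<in> U" for z
  proof -
    have H: "bracket3 (dv xu z) (fv z) (\<xi> z) = bracket3 (du xv z) (fv z) (\<xi> z)" using xi_sym[OF z] by simp
    then have H2: "- (dv b11 z * D z + b11 z * bracket3 (fuv z) (fv z) (\<xi> z)) - b12 z * bracket3 (fvv z) (fv z) (\<xi> z)
        = - (du b12 z * D z + b12 z * bracket3 (fuu z) (fv z) (\<xi> z)) - b22 z * bracket3 (fuv z) (fv z) (\<xi> z)"
      unfolding dvxu[OF z] duxv[OF z] fvu_eq[OF z] by (simp add: br_lin D_def)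
    show ?thesis unfolding X1_def X2_def using H2 by algebra
  qed
  have Cod2: "D z * (du b22 z - dv b12 z) = (b11 z - b22 z) * Y1 z + b12 z * Y2 z" if z: "z \<in> U" for z
  proof -
    have H: "bracket3 (fu z) (dv xu z) (\<xi> z) = bracket3 (fu z) (du xv z) (\<xi> z)" using xi_sym[OF z] by simp
    then have H2: "- (b11 z * bracket3 (fu z) (fuv z) (\<xi> z)) - (dv b12 z * D z + b12 z * bracket3 (fu z) (fvv z) (\<xi> z))
        = - (b12 z * bracket3 (fu z) (fuu z) (\<xi> z)) - (du b22 z * D z + b22 z * bracket3 (fu z) (fuv z) (\<xi> z))"
      unfolding dvxu[OF z] duxv[OF z] fvu_eq[OF z] by (simp add: br_lin D_def)
    show ?thesis unfolding Y1_def Y2_def using H2 by algebra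
  qed
  have sminvD: "smooth2_on U (\<lambda>z. inverse (D z))" by (rule sm_inverse[OF U_open smD Dnz])
  have flat_k': "flat k' h" if "flat k h" for h :: "real \<times> real \<Rightarrow> real"
    using flat_mono[OF that] kk by simp
  have Fm: "flat k (\<lambda>z. ((b11 z - b22 z) * X z + b12 z * Y z) * inverse (D z))"
    if smX: "smooth2_on U X" and smY: "smooth2_on U Y" for X Y :: "real \<times> real \<Rightarrow> real"
  proof -
    have smd: "smooth2_on U (\<lambda>z. b11 z - b22 z)" by (rule sm_diff[OF U_open smb11 smb22])
    have a: "flat (k + 0) (\<lambda>z. (b11 z - b22 z) * X z)"
      by (rule flat_bil[OF bounded_bilinear_mult U_open U0 smd smX Fd flat_0])
    have b: "flat (k + 0) (\<lambda>z. b12 z * Y z)"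
      by (rule flat_bil[OF bounded_bilinear_mult U_open U0 smb12 smY F12 flat_0])
    have smab: "smooth2_on U (\<lambda>z. (b11 z - b22 z) * X z + b12 z * Y z)"
      by (intro sm_add sm_mult U_open smd smX smb12 smY)
    have "flat k (\<lambda>z. (b11 z - b22 z) * X z + b12 z * Y z)"
      using flat_add[OF U_open U0 sm_mult[OF U_open smd smX] sm_mult[OF U_open smb12 smY]] a b by simp
    from flat_bil[OF bounded_bilinear_mult U_open U0 smab sminvD this flat_0]
    show ?thesis by simp
  qed
  have smdu12: "smooth2_on U (du b12)" and smdv12: "smooth2_on U (dv b12)"
    using sm_pd smb12 by auto
  have F12': "flat k' (du b12)" "flat k' (dv b12)" using F12 kk by (simp_all add: flat_Suc)
  have Fdv11: "flat k' (dv b11)"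
  proof (rule flat_cong[OF U_open U0])
    show "flat k' (\<lambda>z. du b12 z + ((b11 z - b22 z) * X1 z + b12 z * X2 z) * inverse (D z))"
      by (rule flat_add[OF U_open U0 smdu12 _ F12'(1) flat_k'[OF Fm[OF smX1 smX2]]])
         (intro sm_mult sm_add sm_diff U_open smb11 smb22 smX1 smb12 smX2 sminvD)
    show "du b12 z + ((b11 z - b22 z) * X1 z + b12 z * X2 z) * inverse (D z) = dv b11 z" if z: "z \<in> U" for z
      using Cod1[OF z] Dnz[OF z] by (simp add: field_simps)
  qed
  have Fdu22: "flat k' (du b22)"
  proof (rule flat_cong[OF U_open U0])
    show "flat k' (\<lambda>z. dv b12 z + ((b11 z - b22 z) * Y1 z + b12 z * Y2 z) * inverse (D z))"
      by (rule flat_add[OF U_open U0 smdv12 _ F12'(2) flat_k'[OF Fm[OF smY1 smY2]]])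
         (intro sm_mult sm_add sm_diff U_open smb11 smb22 smY1 smb12 smY2 sminvD)
    show "dv b12 z + ((b11 z - b22 z) * Y1 z + b12 z * Y2 z) * inverse (D z) = du b22 z" if z: "z \<in> U" for z
      using Cod2[OF z] Dnz[OF z] by (simp add: field_simps)
  qed
  have smd: "smooth2_on U (\<lambda>z. b11 z - b22 z)" by (rule sm_diff[OF U_open smb11 smb22])
  have Fdd: "flat k' (pd b (\<lambda>z. b11 z - b22 z))" for b using Fd kk by (simp add: flat_Suc)
  have pdd: "pd b (\<lambda>z. b11 z - b22 z) z = pd b b11 z - pd b b22 z" if z: "z \<in> U" for z b
    by (rule pd_diff[OF sm_diffble[OF smb11 z] sm_diffble[OF smb22 z]])
  have Fdu11: "flat k' (du b11)"
  proof (rule flat_cong[OF U_open U0])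
    show "flat k' (\<lambda>z. du b22 z + du (\<lambda>z. b11 z - b22 z) z)"
      by (rule flat_add[OF U_open U0 sm_pd[OF smb22] sm_pd[OF smd] Fdu22 Fdd])
    show "du b22 z + du (\<lambda>z. b11 z - b22 z) z = du b11 z" if z: "z \<in> U" for z
      using pdd[OF z] by simp
  qed
  have Fdv22: "flat k' (dv b22)"
  proof (rule flat_cong[OF U_open U0])
    show "flat k' (\<lambda>z. dv b11 z - dv (\<lambda>z. b11 z - b22 z) z)"
      by (rule flat_diff[OF U_open U0 sm_pd[OF smb11] sm_pd[OF smd] Fdv11 Fdd])
    show "dv b11 z - dv (\<lambda>z. b11 z - b22 z) z = dv b22 z" if z: "z \<in> U" for z
      using pdd[OF z] by simp
  qed
  have Fb11: "flat k (\<lambda>z. b11 z - lam)"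
    unfolding kk flat_Suc
  proof (intro conjI allI)
    show "b11 (0, 0) - lam = 0" by (simp add: lam_def)
    fix b
    show "flat k' (pd b (\<lambda>z. b11 z - lam))"
    proof (rule flat_cong[OF U_open U0])
      show "flat k' (pd b b11)" using Fdu11 Fdv11 by (cases b) auto
      show "pd b b11 z = pd b (\<lambda>z. b11 z - lam) z" if z: "z \<in> U" for z
        using pd_diff_const[OF sm_diffble[OF smb11 z]] by simp
    qed
  qed
  have smb11l: "smooth2_on U (\<lambda>z. b11 z - lam)" by (rule sm_diff[OF U_open smb11 sm_const])
  have Fb22: "flat k (\<lambda>z. b22 z - lam)"
    using flat_diff[OF U_open U0 smb11l smd Fb11 Fd] by (rule flat_ext) simp
  have dug: "du g z = (-(1/lam) * (b11 z - lam)) *\<^sub>R fu z + (-(1/lam) * b12 z) *\<^sub>R fv z" if z: "z \<in> U" for z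
  proof -
    have "du g z = du (\<lambda>z. f z + (1 / lam) *\<^sub>R \<xi> z) z"
      unfolding g_def by (rule pd_diff_const[OF sm_diffble[OF sm_add[OF U_open f_smooth sm_scaleR[OF U_open sm_const \<xi>_smooth]] z]])
    also have "\<dots> = fu z + (1 / lam) *\<^sub>R xu z"
      unfolding fu_def xu_def
      using pd_add[OF sm_diffble[OF f_smooth z] sm_diffble[OF sm_scaleR[OF U_open sm_const \<xi>_smooth] z]]
        pd_scaleR_const[OF sm_diffble[OF \<xi>_smooth z]] by simp
    finally show ?thesis unfolding Wu[OF z] using lamnz by (simp add: algebra_simps)
  qed
  have dvg: "dv g z = (-(1/lam) * b12 z) *\<^sub>R fu z + (-(1/lam) * (b22 z - lam)) *\<^sub>R fv z" if z: "z \<in> U" for z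
  proof -
    have "dv g z = dv (\<lambda>z. f z + (1 / lam) *\<^sub>R \<xi> z) z"
      unfolding g_def by (rule pd_diff_const[OF sm_diffble[OF sm_add[OF U_open f_smooth sm_scaleR[OF U_open sm_const \<xi>_smooth]] z]])
    also have "\<dots> = fv z + (1 / lam) *\<^sub>R xv z"
      unfolding fv_def xv_def
      using pd_add[OF sm_diffble[OF f_smooth z] sm_diffble[OF sm_scaleR[OF U_open sm_const \<xi>_smooth] z]]
        pd_scaleR_const[OF sm_diffble[OF \<xi>_smooth z]] by simp
    finally show ?thesis unfolding Wv[OF z] using lamnz by (simp add: algebra_simps)
  qed
  have smb22l: "smooth2_on U (\<lambda>z. b22 z - lam)" by (rule sm_diff[OF U_open smb22 sm_const])
  have Fsc: "flat k (\<lambda>z. (-(1/lam) * a z) *\<^sub>R e z)"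
    if "smooth2_on U a" "flat k a" "smooth2_on U e" for a :: "real \<times> real \<Rightarrow> real" and e :: "real \<times> real \<Rightarrow> real^3"
  proof -
    have "flat k (\<lambda>z. (-(1/lam)) * a z)" by (rule flat_const_mult[OF U_open U0 that(1,2)])
    from flat_bil[OF bounded_bilinear_scaleR U_open U0 sm_mult[OF U_open sm_const that(1)] that(3) this flat_0]
    show ?thesis by simp
  qed
  have smsc: "smooth2_on U (\<lambda>z. (-(1/lam) * a z) *\<^sub>R e z)"
    if "smooth2_on U a" "smooth2_on U e" for a :: "real \<times> real \<Rightarrow> real" and e :: "real \<times> real \<Rightarrow> real^3"
    by (intro sm_scaleR sm_mult U_open sm_const that)
  have Fg: "flat (Suc k) g"
    unfolding flat_Suc
  proof (intro conjI allI)
    show "g (0, 0) = 0" by (simp add: g_def q0_def)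
    fix b
    show "flat k (pd b g)"
    proof (cases b)
      case False
      have h1: "flat k (\<lambda>z. (-(1/lam) * (b11 z - lam)) *\<^sub>R fu z + (-(1/lam) * b12 z) *\<^sub>R fv z)"
        by (rule flat_add[OF U_open U0 smsc[OF smb11l smfu] smsc[OF smb12 smfv] Fsc[OF smb11l Fb11 smfu] Fsc[OF smb12 F12 smfv]])
      show ?thesis using False by (intro flat_cong[OF U_open U0 _ h1]) (simp add: dug)
    next
      case True
      have h1: "flat k (\<lambda>z. (-(1/lam) * b12 z) *\<^sub>R fu z + (-(1/lam) * (b22 z - lam)) *\<^sub>R fv z)"
        by (rule flat_add[OF U_open U0 smsc[OF smb12 smfu] smsc[OF smb22l smfv] Fsc[OF smb12 F12 smfu] Fsc[OF smb22l Fb22 smfv]])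
      show ?thesis using True by (intro flat_cong[OF U_open U0 _ h1]) (simp add: dvg)
    qed
  qed
  have smrho_l: "smooth2_on U (\<lambda>z. (\<rho> z - \<rho> z0) / lam)"
    by (intro sm_mult sm_diff U_open smrho sm_const sm_divide[OF U_open] ; simp add: lamnz)
  have smA: "smooth2_on U (\<lambda>z. (du nuu z - dv nuv z) \<bullet> g z)"
    by (intro sm_inner sm_diff U_open smnuuu smnuvv smg)
  have smB: "smooth2_on U (\<lambda>z. 2 * (dv nuu z \<bullet> g z))"
    by (intro sm_mult sm_inner U_open smnuuv smg sm_const)
  have T1: "flat (Suc k) (\<lambda>z. ((du nuu z - dv nuv z) \<bullet> g z) *\<^sub>R (1::real, 0::real))"
  proof -
    have "flat (0 + Suc k) (\<lambda>z. (du nuu z - dv nuv z) \<bullet> g z)"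
      by (rule flat_bil[OF bounded_bilinear_inner U_open U0 sm_diff[OF U_open smnuuu smnuvv] smg flat_0 Fg])
    then have "flat (Suc k) (\<lambda>z. (du nuu z - dv nuv z) \<bullet> g z)" by simp
    from flat_bil[OF bounded_bilinear_scaleR U_open U0 smA sm_const this flat_0, of "(1::real, 0::real)"]
    show ?thesis unfolding add_0_right .
  qed
  have T2: "flat (Suc k) (\<lambda>z. (2 * (dv nuu z \<bullet> g z)) *\<^sub>R (0::real, 1::real))"
  proof -
    have "flat (0 + Suc k) (\<lambda>z. dv nuu z \<bullet> g z)"
      by (rule flat_bil[OF bounded_bilinear_inner U_open U0 smnuuv smg flat_0 Fg])
    then have "flat (Suc k) (\<lambda>z. 2 * (dv nuu z \<bullet> g z))"
      using flat_const_mult[OF U_open U0 sm_inner[OF U_open smnuuv smg]] by simp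
    from flat_bil[OF bounded_bilinear_scaleR U_open U0 smB sm_const this flat_0, of "(0::real, 1::real)"]
    show ?thesis unfolding add_0_right .
  qed
  have T3: "flat (Suc k) (\<lambda>z. ((\<rho> z - \<rho> z0) / lam) *\<^sub>R BB z)"
  proof -
    have e: "Suc 0 + k = Suc k" by simp
    have "flat (Suc 0) (\<lambda>z. (\<rho> z - \<rho> z0) / lam)" by (rule flat_one) (simp add: z0_def)
    from flat_bil[OF bounded_bilinear_scaleR U_open U0 smrho_l smBB this FBB]
    show ?thesis unfolding e .
  qed
  have smT1: "smooth2_on U (\<lambda>z. ((du nuu z - dv nuv z) \<bullet> g z) *\<^sub>R (1::real, 0::real))"
    by (rule sm_scaleR[OF U_open smA sm_const])
  have smT2: "smooth2_on U (\<lambda>z. (2 * (dv nuu z \<bullet> g z)) *\<^sub>R (0::real, 1::real))"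
    by (rule sm_scaleR[OF U_open smB sm_const])
  have smT3: "smooth2_on U (\<lambda>z. ((\<rho> z - \<rho> z0) / lam) *\<^sub>R BB z)"
    by (rule sm_scaleR[OF U_open smrho_l smBB])
  have FE: "flat (Suc k) E"
    unfolding E_def
    by (rule flat_add[OF U_open U0 sm_add[OF U_open smT1 smT2] smT3 flat_add[OF U_open U0 smT1 smT2 T1 T2] T3])
  have Fdiff: "flat (Suc k) (\<lambda>z. PP z - c *\<^sub>R BB z)"
    by (rule flat_cong[OF U_open U0 _ FE]) (simp add: PE)
  have smPP: "smooth2_on U PP"
  proof (rule sm_cong2[of U "\<lambda>z. (du (du p) z - dv (dv p) z) *\<^sub>R (1::real, 0::real) + (2 * dv (du p) z) *\<^sub>R (0::real, 1::real)"])
    show "smooth2_on U (\<lambda>z. (du (du p) z - dv (dv p) z) *\<^sub>R (1::real, 0::real) + (2 * dv (du p) z) *\<^sub>R (0::real, 1::real))"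
      by (intro sm_add sm_scaleR sm_diff sm_mult sm_pd U_open smp sm_const)
  qed (auto simp: PP_def U_open)
  have smcBB: "smooth2_on U (\<lambda>z. c *\<^sub>R BB z)" by (rule sm_scaleR[OF U_open sm_const smBB])
  have J0: "jet_eq (0, 0) k (\<lambda>z. PP z - c *\<^sub>R BB z) (\<lambda>z. 0)"
    using jet_zero[OF U_open U0 sm_diff[OF U_open smPP smcBB]] Fdiff by blast
  have J: "jet_eq (0, 0) k PP (\<lambda>z. c *\<^sub>R BB z)"
    unfolding jet_eq_def
  proof (intro allI impI)
    fix i j :: nat assume "i + j \<le> k"
    then have "pds (replicate i False @ replicate j True) (\<lambda>z. PP z - c *\<^sub>R BB z) (0, 0) = 0"
      using J0 unfolding jet_eq_def by (simp add: pds_const)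
    then show "pds (replicate i False @ replicate j True) PP (0, 0) = pds (replicate i False @ replicate j True) (\<lambda>z. c *\<^sub>R BB z) (0, 0)"
      using pds_diff[OF U_open smPP smcBB U0] by simp
  qed
  have c_eq: "bracket3 (du f (0, 0)) (dv f (0, 0)) (\<xi> (0, 0)) * bracket3 (\<nu> (0, 0)) (du \<nu> (0, 0)) (dv \<nu> (0, 0)) / \<rho> (0, 0) / b11 (0, 0) = c"
    using delta0 unfolding c_def z0_def fu_def fv_def nuu_def nuv_def lam_def by simp
  show ?thesis
    unfolding Let_def c_eq
    using J unfolding PP_def p_def q0_def lam_def BB_def .
qed

end
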